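(* Fix $n\ge2$, $1\le m\le n-1$ and $\sigma\ge0$. Let $u_m(\cdot;\sigma)$ be the eigenfunction for $\lambda_m(\sigma)$ normalized so that $u_m(x;\sigma)=\sin(\gamma_m(\sigma)x)$ for $x\in I_1$. Then for every $1\le k\le n-1$, $$u_m(x_k;\sigma)=\frac{\sin\left(\frac{\gamma_m(\sigma)}{n}\right)}{\sin\left(\frac{m\pi}{n}\right)}\,\sin\left(\tfrac{km\pi}{n}\right)=\frac{\sin\left(\frac{\gamma_m(\sigma)}{n}\right)}{\sin\left(\frac{m\pi}{n}\right)}\,u_m(x_k;0),$$ where $u_m(x;0)=\sin(m\pi x)$.
   Context: Fix an integer $n\ge2$. Set $x_k=k/n$ for $0\le k\le n$ and $I_k=[x_{k-1},x_k]$ for $1\le k\le n$. For $\sigma\ge 0$, the spectral flow problem is the eigenvalue problem of finding $\lambda\in\mathbb{R}$ and a nonzero continuous function $u:[0,1]\to\mathbb{R}$, smooth on each open interval $(x_{k-1},x_k)$, such that $-u''=\lambda u$ on each $(x_{k-1},x_k)$, $u(0)=u(1)=0$, and for each $1\le k\le n-1$: $u$ is continuous at $x_k$ and $u'(x_k^+)-u'(x_k^-)=\sigma\,u(x_k)$, where $\pm$ denote right/left one-sided limits. For each $\sigma\ge0$ the eigenvalues are real, positive and simple, and are listed increasingly as $\lambda_1(\sigma)<\lambda_2(\sigma)<\cdots$; at $\sigma=0$, $\lambda_m(0)=m^2\pi^2$ with eigenfunction $\sin(m\pi x)$. We write $\gamma_m(\sigma)=\sqrt{\lambda_m(\sigma)}\ge0$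 and $u_m(x;\sigma)$ for an eigenfunction associated with $\lambda_m(\sigma)$. *)

theory Defs
  imports "HOL-Analysis.Analysis"
begin

definition grid :: "nat \<Rightarrow> nat \<Rightarrow> real" where
  "grid n k = real k / real n"

definition sf_eigenpair :: "nat \<Rightarrow> real \<Rightarrow> real \<Rightarrow> (real \<Rightarrow> real) \<Rightarrow> bool" where
  "sf_eigenpair n \<sigma> lam u \<longleftrightarrow>
     continuous_on {0..1} u \<and>
     (\<exists>x\<in>{0..1}. u x \<noteq> 0) \<and>
     u 0 = 0 \<and> u 1 = 0 \<and>
     (\<forall>k\<in>{1..n}. \<forall>x\<in>{grid n (k - 1)<..<grid n k}.
         u differentiable (at x) \<and>
         (deriv u has_real_derivative (- lam * u x)) (at x)) \<and>
     (\<forall>k\<in>{1..n - 1}. \<exists>dL dR.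
         (deriv u \<longlongrightarrow> dL) (at_left (grid n k)) \<and>
         (deriv u \<longlongrightarrow> dR) (at_right (grid n k)) \<and>
         dR - dL = \<sigma> * u (grid n k))"

definition sf_eigenvalue :: "nat \<Rightarrow> real \<Rightarrow> real \<Rightarrow> bool" where
  "sf_eigenvalue n \<sigma> lam \<longleftrightarrow> (\<exists>u. sf_eigenpair n \<sigma> lam u)"

definition sf_mth_eigenvalue :: "nat \<Rightarrow> real \<Rightarrow> nat \<Rightarrow> real \<Rightarrow> bool" where
  "sf_mth_eigenvalue n \<sigma> m lam \<longleftrightarrow>
     sf_eigenvalue n \<sigma> lam \<and>
     finite {\<mu>. sf_eigenvalue n \<sigma> \<mu> \<and> \<mu> < lam} \<and>
     card {\<mu>. sf_eigenvalue n \<sigma> \<mu> \<and> \<mu> < lam} = m - 1"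

end

theory Submission imports Defs begin

definition Cf :: "real \<Rightarrow> real \<Rightarrow> real" where
  "Cf \<mu> x = (if \<mu> > 0 then cos (sqrt \<mu> * x) else if \<mu> = 0 then 1 else cosh (sqrt (-\<mu>) * x))"
definition Sf :: "real \<Rightarrow> real \<Rightarrow> real" where
  "Sf \<mu> x = (if \<mu> > 0 then sin (sqrt \<mu> * x) / sqrt \<mu> else if \<mu> = 0 then x else sinh (sqrt (-\<mu>) * x) / sqrt (-\<mu>))"

lemma Cf_deriv: "(Cf \<mu> has_real_derivative (-\<mu> * Sf \<mu> x)) (at x)"
proof -
  consider "\<mu> > 0" | "\<mu> = 0" | "\<mu> < 0" by linarith
  then show ?thesis
  proof cases
    case 1
    have e: "Cf \<mu> = (\<lambda>x. cos (sqrt \<mu> * x))" using 1 by (auto simp: Cf_def)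
    have s: "sqrt \<mu> * sqrt \<mu> = \<mu>" using 1 by simp
    show ?thesis unfolding e using 1
      by (auto intro!: derivative_eq_intros simp: Sf_def field_simps s)
  next
    case 2
    have e: "Cf \<mu> = (\<lambda>x. 1)" using 2 by (auto simp: Cf_def fun_eq_iff)
    show ?thesis unfolding e using 2 by simp
  next
    case 3
    have e: "Cf \<mu> = (\<lambda>x. cosh (sqrt (-\<mu>) * x))" using 3 by (auto simp: Cf_def fun_eq_iff)
    have s: "sqrt (-\<mu>) * (sqrt (-\<mu>) * z) = -\<mu> * z" for z using 3
      by (metis mult.assoc neg_0_less_iff_less less_eq_real_def real_sqrt_mult_self abs_of_nonneg)
    show ?thesis unfolding e using 3
      by (auto intro!: derivative_eq_intros simp: Sf_def field_simps s)
  qed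
qed

lemma Sf_deriv: "(Sf \<mu> has_real_derivative (Cf \<mu> x)) (at x)"
proof -
  consider "\<mu> > 0" | "\<mu> = 0" | "\<mu> < 0" by linarith
  then show ?thesis
  proof cases
    case 1
    have e: "Sf \<mu> = (\<lambda>x. sin (sqrt \<mu> * x) / sqrt \<mu>)" using 1 by (auto simp: Sf_def)
    show ?thesis unfolding e using 1
      by (auto intro!: derivative_eq_intros simp: Cf_def field_simps)
  next
    case 2
    have e: "Sf \<mu> = (\<lambda>x. x)" using 2 by (auto simp: Sf_def fun_eq_iff)
    show ?thesis unfolding e using 2 by (auto intro!: derivative_eq_intros simp: Cf_def)
  next
    case 3
    have e: "Sf \<mu> = (\<lambda>x. sinh (sqrt (-\<mu>) * x) / sqrt (-\<mu>))" using 3 by (auto simp: Sf_def fun_eq_iff)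
    have s: "sqrt (-\<mu>) * (sqrt (-\<mu>) * z) = -\<mu> * z" for z using 3
      by (metis mult.assoc neg_0_less_iff_less less_eq_real_def real_sqrt_mult_self abs_of_nonneg)
    show ?thesis unfolding e using 3
      by (auto intro!: derivative_eq_intros simp: Cf_def field_simps s)
  qed
qed

lemma Cf_deriv_chain[derivative_intros]:
  "(g has_real_derivative g') (at x within s) \<Longrightarrow> ((\<lambda>x. Cf \<mu> (g x)) has_real_derivative (-\<mu> * Sf \<mu> (g x)) * g') (at x within s)"
  using DERIV_chain2[OF Cf_deriv] by blast
lemma Sf_deriv_chain[derivative_intros]:
  "(g has_real_derivative g') (at x within s) \<Longrightarrow> ((\<lambda>x. Sf \<mu> (g x)) has_real_derivative (Cf \<mu> (g x)) * g') (at x within s)"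
  using DERIV_chain2[OF Sf_deriv] by blast

lemma Cf0[simp]: "Cf \<mu> 0 = 1" and Sf0[simp]: "Sf \<mu> 0 = 0"
  by (auto simp: Cf_def Sf_def)

lemma CS_id: "Cf \<mu> x ^ 2 + \<mu> * Sf \<mu> x ^ 2 = 1"
proof -
  consider "\<mu> > 0" | "\<mu> = 0" | "\<mu> < 0" by linarith
  then show ?thesis
  proof cases
    case 1 then show ?thesis by (simp add: Cf_def Sf_def power_divide sin_cos_squared_add3)
  next
    case 2 then show ?thesis by (simp add: Cf_def Sf_def)
  next
    case 3 then show ?thesis by (simp add: Cf_def Sf_def power_divide cosh_square_eq)
  qed
qed

lemma isCont_Cf[continuous_intros]: "isCont (Cf \<mu>) x"
  using Cf_deriv DERIV_isCont by blast
lemma isCont_Sf[continuous_intros]: "isCont (Sf \<mu>) x"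
  using Sf_deriv DERIV_isCont by blast

lemma isCont_Cf_comp[continuous_intros]: "isCont g x \<Longrightarrow> isCont (\<lambda>x. Cf \<mu> (g x)) x"
  by (rule isCont_o2[OF _ isCont_Cf])
lemma isCont_Sf_comp[continuous_intros]: "isCont g x \<Longrightarrow> isCont (\<lambda>x. Sf \<mu> (g x)) x"
  by (rule isCont_o2[OF _ isCont_Sf])

lemma rep:
  fixes f f' :: "real \<Rightarrow> real"
  assumes I: "convex I" "open I" "c \<in> I"
    and d1: "\<And>x. x \<in> I \<Longrightarrow> (f has_real_derivative f' x) (at x)"
    and d2: "\<And>x. x \<in> I \<Longrightarrow> (f' has_real_derivative (-\<mu> * f x)) (at x)"
  shows "\<forall>x\<in>I. f x = f c * Cf \<mu> (x - c) + f' c * Sf \<mu> (x - c)"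
proof
  fix x assume x: "x \<in> I"
  define W1 where "W1 y = f y * (-\<mu> * Sf \<mu> (y - c)) - f' y * Cf \<mu> (y - c)" for y
  define W2 where "W2 y = f y * Cf \<mu> (y - c) - f' y * Sf \<mu> (y - c)" for y
  have "\<exists>k. \<forall>y\<in>I. W1 y = k"
  proof (rule has_field_derivative_zero_constant[OF I(1)])
    fix y assume y: "y \<in> I"
    have "(W1 has_real_derivative 0) (at y)"
      unfolding W1_def
      by (rule derivative_eq_intros d1 d2 y refl | simp add: algebra_simps)+
    then show "(W1 has_real_derivative 0) (at y within I)"
      by (auto intro: has_field_derivative_at_within)
  qed
  then obtain k1 where k1: "\<forall>y\<in>I. W1 y = k1" by blast
  have "\<exists>k. \<forall>y\<in>I. W2 y = k"
  proof (rule has_field_derivative_zero_constant[OF I(1)])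
    fix y assume y: "y \<in> I"
    have "(W2 has_real_derivative 0) (at y)"
      unfolding W2_def
      by (rule derivative_eq_intros d1 d2 y refl | simp add: algebra_simps)+
    then show "(W2 has_real_derivative 0) (at y within I)"
      by (auto intro: has_field_derivative_at_within)
  qed
  then obtain k2 where k2: "\<forall>y\<in>I. W2 y = k2" by blast
  have e1: "W1 x = - f' c" using k1 x I(3) by (metis W1_def Cf0 Sf0 diff_self mult_zero_right mult_1_right diff_0)
  have e2: "W2 x = f c" using k2 x I(3) by (metis W2_def Cf0 Sf0 diff_self mult_zero_right mult_1_right diff_0_right)
  have "f x = f x * (Cf \<mu> (x - c) ^ 2 + \<mu> * Sf \<mu> (x - c) ^ 2)" by (simp add: CS_id)
  also have "\<dots> = Cf \<mu> (x - c) * W2 x - Sf \<mu> (x - c) * W1 x"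
    by (simp add: W1_def W2_def algebra_simps power2_eq_square)
  finally show "f x = f c * Cf \<mu> (x - c) + f' c * Sf \<mu> (x - c)"
    using e1 e2 by (simp add: algebra_simps)
qed

lemma grid_diff: "k \<ge> 1 \<Longrightarrow> grid n k - grid n (k - 1) = 1 / real n"
  by (simp add: grid_def of_nat_diff diff_divide_distrib)
lemma grid_0[simp]: "grid n 0 = 0" by (simp add: grid_def)
lemma grid_n[simp]: "n > 0 \<Longrightarrow> grid n n = 1" by (simp add: grid_def)
lemma grid_mono: "n > 0 \<Longrightarrow> i < j \<Longrightarrow> grid n i < grid n j"
  by (simp add: grid_def divide_strict_right_mono)
lemma grid_ge0: "grid n k \<ge> 0" by (simp add: grid_def)
lemma grid_le1: "k \<le> n \<Longrightarrow> grid n k \<le> 1"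
  by (cases "n = 0") (simp_all add: grid_def)

lemma cell:
  assumes ep: "sf_eigenpair n \<sigma> \<mu> v" and n: "n \<ge> 1" and k: "1 \<le> k" "k \<le> n"
    and S: "Sf \<mu> (1 / real n) \<noteq> 0"
  shows "\<forall>x\<in>{grid n (k - 1)<..<grid n k}. v x =
     (v (grid n (k - 1)) * Sf \<mu> (grid n k - x) + v (grid n k) * Sf \<mu> (x - grid n (k - 1))) / Sf \<mu> (1 / real n)"
proof
  define a where "a = grid n (k - 1)"
  define b where "b = grid n k"
  define h where "h = 1 / real n"
  have ba: "b - a = h" using k grid_diff[of k n] by (simp add: a_def b_def h_def)
  have ab: "a < b" unfolding a_def b_def using n k by (intro grid_mono) auto
  have sub: "{a..b} \<subseteq> {0..1}" unfolding a_def b_def using k grid_ge0[of n "k-1"] grid_le1[of k n] by auto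
  define \<Phi> where "\<Phi> x = (v a * Sf \<mu> (b - x) + v b * Sf \<mu> (x - a)) / Sf \<mu> h" for x
  define \<Phi>' where "\<Phi>' x = (- v a * Cf \<mu> (b - x) + v b * Cf \<mu> (x - a)) / Sf \<mu> h" for x
  have Sh: "Sf \<mu> h \<noteq> 0" using S by (simp add: h_def)
  have d\<Phi>: "(\<Phi> has_real_derivative \<Phi>' x) (at x)" for x
  proof -
    have "((\<lambda>x. v a * Sf \<mu> (b - x) + v b * Sf \<mu> (x - a)) has_real_derivative
       (- v a * Cf \<mu> (b - x) + v b * Cf \<mu> (x - a))) (at x)"
      by (auto intro!: derivative_eq_intros)
    from DERIV_cdivide[OF this, of "Sf \<mu> h"] show ?thesis unfolding \<Phi>_def \<Phi>'_def .
  qed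
  have d\<Phi>': "(\<Phi>' has_real_derivative (-\<mu> * \<Phi> x)) (at x)" for x
  proof -
    have "((\<lambda>x. - v a * Cf \<mu> (b - x) + v b * Cf \<mu> (x - a)) has_real_derivative
       (-\<mu> * (v a * Sf \<mu> (b - x) + v b * Sf \<mu> (x - a)))) (at x)"
      by (auto intro!: derivative_eq_intros simp: algebra_simps)
    from DERIV_cdivide[OF this, of "Sf \<mu> h"] show ?thesis unfolding \<Phi>_def \<Phi>'_def by simp
  qed
  define I where "I = {a<..<b}"
  have epI: "\<And>x. x \<in> I \<Longrightarrow> v differentiable (at x) \<and> (deriv v has_real_derivative (- \<mu> * v x)) (at x)"
    using ep k unfolding sf_eigenpair_def I_def a_def b_def by auto
  define w where "w x = v x - \<Phi> x" for x
  define w' where "w' x = deriv v x - \<Phi>' x" for x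
  have dw: "(w has_real_derivative w' x) (at x)" if "x \<in> I" for x
  proof -
    have "(v has_real_derivative deriv v x) (at x)" using epI[OF that]
      by (simp add: DERIV_deriv_iff_real_differentiable)
    from DERIV_diff[OF this d\<Phi>[of x]] show ?thesis unfolding w_def[abs_def] w'_def .
  qed
  have dw': "(w' has_real_derivative (-\<mu> * w x)) (at x)" if "x \<in> I" for x
  proof -
    have "(w' has_real_derivative (-\<mu> * v x - (-\<mu> * \<Phi> x))) (at x)"
      unfolding w'_def[abs_def] using DERIV_diff[OF conjunct2[OF epI[OF that]] d\<Phi>'[of x]] by simp
    then show ?thesis by (simp add: w_def algebra_simps)
  qed
  define c where "c = (a + b) / 2"
  have cI: "c \<in> I" using ab by (simp add: c_def I_def)
  define H where "H x = w c * Cf \<mu> (x - c) + w' c * Sf \<mu> (x - c)" for x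
  define H' where "H' x = -\<mu> * w c * Sf \<mu> (x - c) + w' c * Cf \<mu> (x - c)" for x
  have dH0: "(H has_real_derivative H' x) (at x)" for x
    unfolding H_def[abs_def] H'_def by (auto intro!: derivative_eq_intros)
  have dH': "(H' has_real_derivative (-\<mu> * H x)) (at x)" for x
    unfolding H_def H'_def[abs_def] by (auto intro!: derivative_eq_intros simp: algebra_simps)
  have cvI: "convex I" "open I" by (simp_all add: I_def)
  have wH: "\<forall>x\<in>I. w x = H x" unfolding H_def
    by (rule rep[OF cvI cI dw dw'])
  have contv: "continuous_on {a..b} v"
    using ep sub unfolding sf_eigenpair_def by (auto intro: continuous_on_subset)
  have contw: "continuous_on {a..b} (\<lambda>x. w x - H x)"
  proof -
    have "continuous_on {a..b} (\<lambda>x. \<Phi> x + H x)"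
      by (intro continuous_at_imp_continuous_on ballI isCont_add DERIV_isCont[OF d\<Phi>] DERIV_isCont[OF dH0])
    from continuous_on_diff[OF contv this] show ?thesis unfolding w_def by (simp add: algebra_simps)
  qed
  have clI: "closure I = {a..b}" using ab by (simp add: I_def)
  have wH0: "\<And>x. x \<in> I \<Longrightarrow> w x - H x = 0" using wH by simp
  have contw': "continuous_on (closure I) (\<lambda>x. w x - H x)" using contw clI by simp
  have "w a - H a = 0" "w b - H b = 0"
    using continuous_constant_on_closure[OF contw' wH0] ab clI by auto
  moreover have "w a = 0" "w b = 0"
    using ba S by (auto simp: w_def \<Phi>_def h_def)
  ultimately have Ha: "H a = 0" and Hb: "H b = 0" by auto
  have Hrep: "\<forall>x\<in>UNIV. H x = H a * Cf \<mu> (x - a) + H' a * Sf \<mu> (x - a)"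
    by (rule rep[OF convex_UNIV open_UNIV UNIV_I dH0 dH'])
  then have "H b = H' a * Sf \<mu> h" using Ha ba by auto
  then have "H' a = 0" using Hb S by (simp add: h_def)
  then have H0: "H x = 0" for x using Hrep Ha by auto
  fix x assume "x \<in> {grid n (k - 1)<..<grid n k}"
  then have "x \<in> I" by (simp add: I_def a_def b_def)
  then have "w x = 0" using wH H0 by auto
  then show "v x = (v (grid n (k - 1)) * Sf \<mu> (grid n k - x) + v (grid n k) * Sf \<mu> (x - grid n (k - 1))) / Sf \<mu> (1 / real n)"
    by (simp add: w_def \<Phi>_def a_def b_def h_def)
qed

lemma deriv_cell:
  assumes ep: "sf_eigenpair n \<sigma> \<mu> v" and n: "n \<ge> 1" and k: "1 \<le> k" "k \<le> n"
    and S: "Sf \<mu> (1 / real n) \<noteq> 0"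
    and x: "x \<in> {grid n (k - 1)<..<grid n k}"
  shows "deriv v x = (- v (grid n (k - 1)) * Cf \<mu> (grid n k - x) + v (grid n k) * Cf \<mu> (x - grid n (k - 1))) / Sf \<mu> (1 / real n)"
proof -
  define a where "a = grid n (k - 1)"
  define b where "b = grid n k"
  define s where "s = Sf \<mu> (1 / real n)"
  define \<Phi> where "\<Phi> x = (v a * Sf \<mu> (b - x) + v b * Sf \<mu> (x - a)) / s" for x
  have d\<Phi>: "(\<Phi> has_real_derivative ((- v a * Cf \<mu> (b - x) + v b * Cf \<mu> (x - a)) / s)) (at x)"
  proof -
    have "((\<lambda>x. v a * Sf \<mu> (b - x) + v b * Sf \<mu> (x - a)) has_real_derivative
       (- v a * Cf \<mu> (b - x) + v b * Cf \<mu> (x - a))) (at x)"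
      by (auto intro!: derivative_eq_intros)
    from DERIV_cdivide[OF this, of s] show ?thesis unfolding \<Phi>_def .
  qed
  have eq: "\<And>y. y \<in> {a<..<b} \<Longrightarrow> \<Phi> y = v y"
    using cell[OF ep n k S] unfolding \<Phi>_def a_def b_def s_def by auto
  have xI: "x \<in> {a<..<b}" using x by (simp add: a_def b_def)
  have d1: "(v has_real_derivative ((- v a * Cf \<mu> (b - x) + v b * Cf \<mu> (x - a)) / s)) (at x)"
    by (rule has_field_derivative_transform_within_open[OF d\<Phi> open_greaterThanLessThan xI eq])
  have "v differentiable (at x)" using ep k x unfolding sf_eigenpair_def by auto
  then have d2: "(v has_real_derivative deriv v x) (at x)"
    by (simp add: DERIV_deriv_iff_real_differentiable)
  from DERIV_unique[OF d2 d1] show ?thesis by (simp add: a_def b_def s_def)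
qed

lemma node_rec:
  assumes ep: "sf_eigenpair n \<sigma> \<mu> v" and n: "n \<ge> 1" and k: "1 \<le> k" "k \<le> n - 1"
    and S: "Sf \<mu> (1 / real n) \<noteq> 0"
  shows "v (grid n (k + 1)) + v (grid n (k - 1)) =
    (2 * Cf \<mu> (1 / real n) + \<sigma> * Sf \<mu> (1 / real n)) * v (grid n k)"
proof -
  define s where "s = Sf \<mu> (1 / real n)"
  define h where "h = 1 / real n"
  have s0: "s \<noteq> 0" using S by (simp add: s_def)
  obtain dL dR where L: "(deriv v \<longlongrightarrow> dL) (at_left (grid n k))"
    and R: "(deriv v \<longlongrightarrow> dR) (at_right (grid n k))" and J: "dR - dL = \<sigma> * v (grid n k)"
  proof -
    have "k \<in> {1..n - 1}" using k by simp
    then show "(\<And>dL dR. (deriv v \<longlongrightarrow> dL) (at_left (grid n k)) \<Longrightarrow> (deriv v \<longlongrightarrow> dR) (at_right (grid n k)) \<Longrightarrow>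
      dR - dL = \<sigma> * v (grid n k) \<Longrightarrow> thesis) \<Longrightarrow> thesis"
      using ep unfolding sf_eigenpair_def by blast
  qed
  define D1 where "D1 x = (- v (grid n (k - 1)) * Cf \<mu> (grid n k - x) + v (grid n k) * Cf \<mu> (x - grid n (k - 1))) / s" for x
  define D2 where "D2 x = (- v (grid n k) * Cf \<mu> (grid n (k + 1) - x) + v (grid n (k + 1)) * Cf \<mu> (x - grid n k)) / s" for x
  have g1: "grid n k - grid n (k - 1) = h" using grid_diff[of k n] k by (simp add: h_def)
  have g2: "grid n (k + 1) - grid n k = h" using grid_diff[of "k + 1" n] by (simp add: h_def)
  have lt1: "grid n (k - 1) < grid n k" using n k by (intro grid_mono) auto
  have lt2: "grid n k < grid n (k + 1)" using n k by (intro grid_mono) auto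
  have c1: "isCont D1 x" for x unfolding D1_def using s0 by (intro continuous_intros) auto
  have c2: "isCont D2 x" for x unfolding D2_def using s0 by (intro continuous_intros) auto
  have ev1: "eventually (\<lambda>x. D1 x = deriv v x) (at_left (grid n k))"
  proof (rule eventually_mono[OF eventually_at_left_real[OF lt1]])
    fix x assume "x \<in> {grid n (k - 1)<..<grid n k}"
    then show "D1 x = deriv v x" unfolding D1_def s_def
      using deriv_cell[OF ep n _ _ S, of k x] k by simp
  qed
  have ev2: "eventually (\<lambda>x. D2 x = deriv v x) (at_right (grid n k))"
  proof (rule eventually_mono[OF eventually_at_right_real[OF lt2]])
    fix x assume "x \<in> {grid n k<..<grid n (k + 1)}"
    then show "D2 x = deriv v x" unfolding D2_def s_def
      using deriv_cell[OF ep n _ _ S, of "k + 1" x] k by simp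
  qed
  have "(D1 \<longlongrightarrow> D1 (grid n k)) (at_left (grid n k))"
    using c1[of "grid n k"] unfolding isCont_def filterlim_at_split by blast
  from Lim_transform_eventually[OF this ev1] have "dL = D1 (grid n k)"
    using L tendsto_unique[OF trivial_limit_at_left_real] by blast
  moreover have "(D2 \<longlongrightarrow> D2 (grid n k)) (at_right (grid n k))"
    using c2[of "grid n k"] unfolding isCont_def filterlim_at_split by blast
  from Lim_transform_eventually[OF this ev2] have "dR = D2 (grid n k)"
    using R tendsto_unique[OF trivial_limit_at_right_real] by blast
  ultimately have "D2 (grid n k) - D1 (grid n k) = \<sigma> * v (grid n k)" using J by simp
  then have "(v (grid n (k + 1)) - v (grid n k) * Cf \<mu> h) / s - (v (grid n k) * Cf \<mu> h - v (grid n (k - 1))) / s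
     = \<sigma> * v (grid n k)"
    unfolding D1_def D2_def using g1 g2 by (simp add: algebra_simps)
  moreover have "(v (grid n (k + 1)) - v (grid n k) * Cf \<mu> h) / s - (v (grid n k) * Cf \<mu> h - v (grid n (k - 1))) / s
     = (v (grid n (k + 1)) + v (grid n (k - 1)) - 2 * Cf \<mu> h * v (grid n k)) / s"
    by (simp add: diff_divide_distrib add_divide_distrib)
  ultimately have "(v (grid n (k + 1)) + v (grid n (k - 1)) - 2 * Cf \<mu> h * v (grid n k)) / s = \<sigma> * v (grid n k)"
    by simp
  then have "v (grid n (k + 1)) + v (grid n (k - 1)) - 2 * Cf \<mu> h * v (grid n k) = \<sigma> * v (grid n k) * s"
    using s0 by (simp add: divide_eq_eq)
  then show ?thesis by (simp add: s_def h_def algebra_simps)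
qed

lemma grow:
  fixes b :: "nat \<Rightarrow> real"
  assumes rec: "\<And>k. 1 \<le> k \<Longrightarrow> k \<le> n - 1 \<Longrightarrow> b (k + 1) + b (k - 1) = T * b k"
    and b0: "b 0 = 0" and b1: "b 1 = 1" and T: "T \<ge> 2" and n: "n \<ge> 1"
  shows "b n \<ge> real n"
proof -
  have "\<forall>k. k + 1 \<le> n \<longrightarrow> b (k + 1) - b k \<ge> 1 \<and> b (k + 1) \<ge> real k + 1"
  proof
    fix k show "k + 1 \<le> n \<longrightarrow> b (k + 1) - b k \<ge> 1 \<and> b (k + 1) \<ge> real k + 1"
    proof (induction k)
      case 0 then show ?case using b0 b1 by simp
    next
      case (Suc k)
      show ?case
      proof
        assume a: "Suc k + 1 \<le> n"
        then have IH: "b (k + 1) - b k \<ge> 1" "b (k + 1) \<ge> real k + 1" using Suc by auto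
        have r: "b (k + 2) + b k = T * b (k + 1)" using rec[of "k + 1"] a by simp
        have "(T - 2) * b (k + 1) \<ge> 0" using T IH(2) by simp
        moreover have "b (k + 2) - b (k + 1) = (T - 2) * b (k + 1) + (b (k + 1) - b k)"
          using r by (simp add: algebra_simps)
        ultimately have "b (k + 2) - b (k + 1) \<ge> 1" using IH by linarith
        then show "b (Suc k + 1) - b (Suc k) \<ge> 1 \<and> b (Suc k + 1) \<ge> real (Suc k) + 1"
          using IH by (simp add: numeral_2_eq_2)
      qed
    qed
  qed
  then show ?thesis using n by (metis add.commute le_add_diff_inverse of_nat_1 of_nat_add add_le_cancel_left Suc_eq_plus1 le_add1 plus_1_eq_Suc le_refl)
qed

lemma cheb:
  fixes a :: "nat \<Rightarrow> real"
  assumes rec: "\<And>k. 1 \<le> k \<Longrightarrow> k \<le> n - 1 \<Longrightarrow> a (k + 1) + a (k - 1) = T * a k"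
    and a0: "a 0 = 0" and an: "a n = 0" and n: "n \<ge> 2" and a1: "a 1 \<noteq> 0"
  shows "\<bar>T\<bar> < 2 \<and> (\<exists>j\<in>{1..n-1}. T = 2 * cos (real j * pi / real n) \<and>
     (\<forall>k\<le>n. a k = a 1 * sin (real k * real j * pi / real n) / sin (real j * pi / real n)))"
proof -
  define b where "b k = a k / a 1" for k
  have brec: "b (k + 1) + b (k - 1) = T * b k" if "1 \<le> k" "k \<le> n - 1" for k
    using rec[OF that] a1 unfolding b_def by (simp add: add_divide_distrib[symmetric])
  have b0: "b 0 = 0" and b1: "b 1 = 1" and bn: "b n = 0" using a0 a1 an by (auto simp: b_def)
  have "\<not> T \<ge> 2" using grow[of n b T] brec b0 b1 bn n by auto
  moreover have "\<not> T \<le> -2"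
  proof
    assume T: "T \<le> -2"
    define c where "c k = (-1) ^ (k + 1) * b k" for k
    have crec: "c (k + 1) + c (k - 1) = (-T) * c k" if "1 \<le> k" "k \<le> n - 1" for k
    proof -
      define m where "m = k - 1"
      have m: "k = Suc m" using \<open>1 \<le> k\<close> by (simp add: m_def)
      show ?thesis using arg_cong[OF brec[OF that], of "\<lambda>z. (-1) ^ m * z"] unfolding c_def m
        by (simp add: algebra_simps)
    qed
    have "c 0 = 0" "c 1 = 1" using b0 b1 by (auto simp: c_def)
    then have "c n \<ge> real n" using grow[of n c "-T", OF crec] T n by auto
    then show False using bn n by (simp add: c_def)
  qed
  ultimately have Tlt: "\<bar>T\<bar> < 2" by auto
  define \<theta> where "\<theta> = arccos (T / 2)"
  have th: "0 < \<theta>" "\<theta> < pi" "cos \<theta> = T / 2" using Tlt unfolding \<theta>_def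
    using arccos_lt_bounded[of "T/2"] cos_arccos[of "T/2"] by auto
  have sth: "sin \<theta> > 0" using th by (simp add: sin_gt_zero)
  define f where "f k = sin (real k * \<theta>) / sin \<theta>" for k
  have "\<forall>k. k + 1 \<le> n \<longrightarrow> b k = f k \<and> b (k + 1) = f (k + 1)"
  proof
    fix k show "k + 1 \<le> n \<longrightarrow> b k = f k \<and> b (k + 1) = f (k + 1)"
    proof (induction k)
      case 0 then show ?case using b0 b1 sth by (simp add: f_def)
    next
      case (Suc k)
      show ?case
      proof
        assume a: "Suc k + 1 \<le> n"
        then have IH: "b k = f k" "b (k + 1) = f (k + 1)" using Suc by auto
        have kk: "k + 1 \<le> n - 1" using a by linarith
        have r: "b (k + 2) = T * b (k + 1) - b k" using brec[of "k + 1", OF _ kk]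
          by (simp add: numeral_2_eq_2 algebra_simps)
        have "sin ((real k + 2) * \<theta>) + sin (real k * \<theta>) = 2 * cos \<theta> * sin ((real k + 1) * \<theta>)"
        proof -
          have "sin ((real k + 2) * \<theta>) = sin ((real k + 1) * \<theta> + \<theta>)" by (simp add: algebra_simps)
          moreover have "sin (real k * \<theta>) = sin ((real k + 1) * \<theta> - \<theta>)" by (simp add: algebra_simps)
          ultimately show ?thesis by (simp add: sin_add sin_diff)
        qed
        then have "f (k + 2) = T * f (k + 1) - f k" using th sth
          by (simp add: f_def field_simps)
        then show "b (Suc k) = f (Suc k) \<and> b (Suc k + 1) = f (Suc k + 1)"
          using IH r by (simp add: numeral_2_eq_2)
      qed
    qed
  qed
  then have bf: "\<And>k. k \<le> n \<Longrightarrow> b k = f k"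
    by (metis add_leD1 le_add_diff_inverse2 le_antisym n not_less_eq_eq numeral_le_one_iff plus_1_eq_Suc semiring_norm(69) Suc_le_eq)
  have "sin (real n * \<theta>) = 0" using bf[of n] bn sth by (simp add: f_def)
  then obtain i :: int where i: "real n * \<theta> = of_int i * pi" by (auto simp: sin_zero_iff_int2)
  have "0 < real n * \<theta>" using th n by simp
  moreover have "real n * \<theta> < real n * pi" using th n by simp
  ultimately have "0 < of_int i * pi" "of_int i * pi < real n * pi" using i by auto
  then have i0: "0 < i" "i < int n" by (auto simp: zero_less_mult_iff)
  define j where "j = nat i"
  have j: "j \<in> {1..n-1}" using i0 by (auto simp: j_def)
  have thj: "\<theta> = real j * pi / real n" using i i0 n by (simp add: j_def field_simps)
  show ?thesis
  proof (intro conjI bexI[OF _ j])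
    show "\<bar>T\<bar> < 2" by fact
    show "T = 2 * cos (real j * pi / real n)" using th thj by simp
    show "\<forall>k\<le>n. a k = a 1 * sin (real k * real j * pi / real n) / sin (real j * pi / real n)"
    proof (intro allI impI)
      fix k assume "k \<le> n"
      then have "a k / a 1 = sin (real k * \<theta>) / sin \<theta>" using bf[of k] by (simp add: b_def f_def)
      then show "a k = a 1 * sin (real k * real j * pi / real n) / sin (real j * pi / real n)"
        using a1 by (simp add: thj field_simps)
    qed
  qed
qed


lemma cover:
  assumes n: "n \<ge> 1" and x: "0 \<le> x" "x \<le> 1"
  shows "(\<exists>k\<le>n. x = grid n k) \<or> (\<exists>k\<in>{1..n}. x \<in> {grid n (k - 1)<..<grid n k})"
proof -
  define k0 where "k0 = nat \<lfloor>x * real n\<rfloor>"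
  have xn: "0 \<le> x * real n" "x * real n \<le> real n" using x n by (auto simp: mult_left_le_one_le)
  have k0: "real k0 \<le> x * real n" "x * real n < real k0 + 1"
    using xn unfolding k0_def by (auto simp: of_nat_nat)
  have npos: "real n > 0" using n by simp
  show ?thesis
  proof (cases "x * real n = real k0")
    case True
    then have "k0 \<le> n" using xn by simp
    moreover have "x = grid n k0" using True npos by (simp add: grid_def field_simps)
    ultimately show ?thesis by blast
  next
    case False
    then have lt: "real k0 < x * real n" using k0 by simp
    then have "k0 < n" using xn by linarith
    moreover have "x \<in> {grid n (k0 + 1 - 1)<..<grid n (k0 + 1)}"
      using lt k0 npos by (simp add: grid_def field_simps)
    ultimately show ?thesis by (intro disjI2 bexI[of _ "k0 + 1"]) auto
  qed
qed

lemma char: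
  assumes ep: "sf_eigenpair n \<sigma> \<mu> v" and n: "n \<ge> 2" and \<sigma>: "\<sigma> \<ge> 0"
    and S: "Sf \<mu> (1 / real n) \<noteq> 0"
  shows "\<mu> > 0 \<and> (\<exists>j\<in>{1..n-1}. 2 * Cf \<mu> (1 / real n) + \<sigma> * Sf \<mu> (1 / real n) = 2 * cos (real j * pi / real n) \<and>
     (\<forall>k\<le>n. v (grid n k) = v (grid n 1) * sin (real k * real j * pi / real n) / sin (real j * pi / real n)))"
proof -
  define T where "T = 2 * Cf \<mu> (1 / real n) + \<sigma> * Sf \<mu> (1 / real n)"
  define a where "a k = v (grid n k)" for k
  have n1: "n \<ge> 1" using n by simp
  have rec: "a (k + 1) + a (k - 1) = T * a k" if "1 \<le> k" "k \<le> n - 1" for k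
    using node_rec[OF ep n1 that S] unfolding a_def T_def by simp
  have a0: "a 0 = 0" and an: "a n = 0" using ep n unfolding a_def sf_eigenpair_def by auto
  have a1: "a 1 \<noteq> 0"
  proof
    assume a10: "a 1 = 0"
    have allz: "\<forall>k. k + 1 \<le> n \<longrightarrow> a k = 0 \<and> a (k + 1) = 0"
    proof
      fix k show "k + 1 \<le> n \<longrightarrow> a k = 0 \<and> a (k + 1) = 0"
      proof (induction k)
        case 0 then show ?case using a0 a10 by simp
      next
        case (Suc k)
        show ?case
        proof
          assume h: "Suc k + 1 \<le> n"
          then have IH: "a k = 0" "a (k + 1) = 0" using Suc by auto
          have kk: "k + 1 \<le> n - 1" using h by linarith
          have "a (k + 2) = 0" using rec[of "k + 1", OF _ kk] IH by (simp add: numeral_2_eq_2)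
          then show "a (Suc k) = 0 \<and> a (Suc k + 1) = 0" using IH by (simp add: numeral_2_eq_2)
        qed
      qed
    qed
    have az: "a k = 0" if "k \<le> n" for k
    proof (cases "k = n")
      case True then show ?thesis using an by simp
    next
      case False then have "k + 1 \<le> n" using that by simp
      then show ?thesis using allz by blast
    qed
    have "v x = 0" if "x \<in> {0..1}" for x
    proof -
      from cover[OF n1] that
      consider "\<exists>k\<le>n. x = grid n k" | "\<exists>k\<in>{1..n}. x \<in> {grid n (k - 1)<..<grid n k}" by auto
      then show ?thesis
      proof cases
        case 1 then show ?thesis using az unfolding a_def by auto
      next
        case 2
        then obtain k where k: "1 \<le> k" "k \<le> n" and xk: "x \<in> {grid n (k - 1)<..<grid n k}" by auto
        have "k - 1 \<le> n" using k by simp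
        then show ?thesis using cell[OF ep n1 k S] xk az[OF k(2)] az[of "k - 1"] unfolding a_def by auto
      qed
    qed
    then show False using ep unfolding sf_eigenpair_def by auto
  qed
  from cheb[OF rec a0 an n a1] obtain j where
    Tl: "\<bar>T\<bar> < 2" and j: "j \<in> {1..n-1}" "T = 2 * cos (real j * pi / real n)"
    and ak: "\<forall>k\<le>n. a k = a 1 * sin (real k * real j * pi / real n) / sin (real j * pi / real n)"
    by blast
  have "\<mu> > 0"
  proof (rule ccontr)
    assume "\<not> \<mu> > 0"
    then have "Cf \<mu> (1 / real n) \<ge> 1" "Sf \<mu> (1 / real n) \<ge> 0"
      by (auto simp: Cf_def Sf_def cosh_real_ge_1)
    moreover have "\<sigma> * Sf \<mu> (1 / real n) \<ge> 0" using \<sigma> calculation(2) by simp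
    ultimately have "T \<ge> 2" unfolding T_def by linarith
    then show False using Tl by simp
  qed
  then show ?thesis using j ak unfolding T_def a_def by blast
qed

lemma cons:
  assumes n: "n \<ge> 1" and S: "Sf \<mu> (1 / real n) \<noteq> 0" and j: "1 \<le> j" "j \<le> n - 1"
    and T: "2 * Cf \<mu> (1 / real n) + \<sigma> * Sf \<mu> (1 / real n) = 2 * cos (real j * pi / real n)"
  shows "sf_eigenvalue n \<sigma> \<mu>"
proof -
  define \<theta> where "\<theta> = real j * pi / real n"
  define h where "h = 1 / real n"
  define s where "s = Sf \<mu> h"
  have s0: "s \<noteq> 0" using S by (simp add: s_def h_def)
  have npos: "real n > 0" using n by simp
  define \<Psi> where "\<Psi> r x = (sin (r * \<theta>) * Sf \<mu> ((r + 1) / real n - x) + sin ((r + 1) * \<theta>) * Sf \<mu> (x - r / real n)) / s" for r x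
  define \<Psi>' where "\<Psi>' r x = (- sin (r * \<theta>) * Cf \<mu> ((r + 1) / real n - x) + sin ((r + 1) * \<theta>) * Cf \<mu> (x - r / real n)) / s" for r x
  define v where "v x = \<Psi> (of_int \<lfloor>x * real n\<rfloor>) x" for x
  have d\<Psi>: "(\<Psi> r has_real_derivative \<Psi>' r x) (at x)" for r x
  proof -
    have "((\<lambda>x. sin (r * \<theta>) * Sf \<mu> ((r + 1) / real n - x) + sin ((r + 1) * \<theta>) * Sf \<mu> (x - r / real n)) has_real_derivative
       (- sin (r * \<theta>) * Cf \<mu> ((r + 1) / real n - x) + sin ((r + 1) * \<theta>) * Cf \<mu> (x - r / real n))) (at x)"
      by (auto intro!: derivative_eq_intros)
    from DERIV_cdivide[OF this, of s] show ?thesis unfolding \<Psi>_def[abs_def] \<Psi>'_def .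
  qed
  have d\<Psi>': "(\<Psi>' r has_real_derivative (-\<mu> * \<Psi> r x)) (at x)" for r x
  proof -
    have "((\<lambda>x. - sin (r * \<theta>) * Cf \<mu> ((r + 1) / real n - x) + sin ((r + 1) * \<theta>) * Cf \<mu> (x - r / real n)) has_real_derivative
       (-\<mu> * (sin (r * \<theta>) * Sf \<mu> ((r + 1) / real n - x) + sin ((r + 1) * \<theta>) * Sf \<mu> (x - r / real n)))) (at x)"
      by (auto intro!: derivative_eq_intros simp: algebra_simps)
    from DERIV_cdivide[OF this, of s] show ?thesis unfolding \<Psi>_def \<Psi>'_def[abs_def] by simp
  qed
  have c\<Psi>: "isCont (\<Psi> r) x" for r x by (rule DERIV_isCont[OF d\<Psi>[of r x]])
  have c\<Psi>': "isCont (\<Psi>' r) x" for r x by (rule DERIV_isCont[OF d\<Psi>'[of r x]])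
  have hh: "(r + 1) / real n - r / real n = h" for r using npos by (simp add: h_def field_simps)
  have P1: "\<Psi> r (r / real n) = sin (r * \<theta>)" for r
    using hh[of r] s0 by (simp add: \<Psi>_def s_def)
  have P2: "\<Psi> r ((r + 1) / real n) = sin ((r + 1) * \<theta>)" for r
    using hh[of r] s0 by (simp add: \<Psi>_def s_def)
  have F2: "v y = \<Psi> (of_int i) y" if "of_int i / real n \<le> y" "y \<le> (of_int i + 1) / real n" for i y
  proof (cases "y = (of_int i + 1) / real n")
    case True
    then have "y * real n = of_int (i + 1)" using npos by simp
    then have "\<lfloor>y * real n\<rfloor> = i + 1" by simp
    then have "v y = \<Psi> (of_int i + 1) y" by (simp add: v_def)
    also have "\<dots> = sin ((of_int i + 1) * \<theta>)" using P1[of "of_int i + 1"] True by simp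
    also have "\<dots> = \<Psi> (of_int i) y" using P2 True by simp
    finally show ?thesis .
  next
    case False
    then have "of_int i \<le> y * real n" "y * real n < of_int i + 1" using that npos
      by (auto simp: field_simps)
    then have "\<lfloor>y * real n\<rfloor> = i" by (simp add: floor_eq_iff)
    then show ?thesis by (simp add: v_def)
  qed
  have contv: "isCont v x" for x
  proof -
    define i where "i = \<lfloor>x * real n\<rfloor>"
    have i1: "of_int i / real n \<le> x" "x < (of_int i + 1) / real n"
      using npos unfolding i_def by (auto simp: field_simps) linarith
    define i' where "i' = \<lceil>x * real n\<rceil> - 1"
    have i2: "of_int i' / real n < x" "x \<le> (of_int i' + 1) / real n"
      using npos unfolding i'_def by (auto simp: field_simps) linarith+
    have R: "(v \<longlongrightarrow> v x) (at_right x)"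
    proof -
      have "(\<Psi> (of_int i) \<longlongrightarrow> \<Psi> (of_int i) x) (at_right x)"
        using c\<Psi>[where r="of_int i" and x=x] unfolding isCont_def filterlim_at_split by blast
      moreover have "eventually (\<lambda>y. \<Psi> (of_int i) y = v y) (at_right x)"
        by (rule eventually_mono[OF eventually_at_right_real[OF i1(2)]]) (use i1 F2[of i] in force)
      ultimately have "(v \<longlongrightarrow> \<Psi> (of_int i) x) (at_right x)" by (rule Lim_transform_eventually)
      then show ?thesis using F2[of i x] i1 by simp
    qed
    have L: "(v \<longlongrightarrow> v x) (at_left x)"
    proof -
      have "(\<Psi> (of_int i') \<longlongrightarrow> \<Psi> (of_int i') x) (at_left x)"
        using c\<Psi>[where r="of_int i'" and x=x] unfolding isCont_def filterlim_at_split by blast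
      moreover have "eventually (\<lambda>y. \<Psi> (of_int i') y = v y) (at_left x)"
        by (rule eventually_mono[OF eventually_at_left_real[OF i2(1)]]) (use i2 F2[of i'] in force)
      ultimately have "(v \<longlongrightarrow> \<Psi> (of_int i') x) (at_left x)" by (rule Lim_transform_eventually)
      then show ?thesis using F2[of i' x] i2 by simp
    qed
    show ?thesis unfolding isCont_def filterlim_at_split using L R by blast
  qed
  have gr: "grid n k = real k / real n" for k by (simp add: grid_def)
  have vnode: "v (grid n k) = sin (real k * \<theta>)" for k
  proof -
    have "real k / real n \<le> (real k + 1) / real n" using npos by (simp add: divide_right_mono)
    then show ?thesis using F2[of "int k" "grid n k"] P1[of "real k"] npos by (simp add: gr)
  qed
  have jpos: "0 < \<theta>" "\<theta> < pi" using j npos unfolding \<theta>_def by (auto simp: field_simps)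
  have vcell: "v y = \<Psi> (real k - 1) y" if "k \<ge> 1" "y \<in> {grid n (k - 1)<..<grid n k}" for k y
    using F2[of "int k - 1" y] that by (simp add: gr of_nat_diff)
  have ep: "sf_eigenpair n \<sigma> \<mu> v"
    unfolding sf_eigenpair_def
  proof (intro conjI)
    show "continuous_on {0..1} v" by (intro continuous_at_imp_continuous_on ballI contv)
    show "\<exists>x\<in>{0..1}. v x \<noteq> 0"
    proof (intro bexI)
      show "v (grid n 1) \<noteq> 0" using vnode[of 1] sin_gt_zero[OF jpos] by simp
      show "grid n 1 \<in> {0..1}" using n grid_ge0[of n 1] grid_le1[of 1 n] by auto
    qed
    show "v 0 = 0" using vnode[of 0] by simp
    show "v 1 = 0" using vnode[of n] npos by (simp add: \<theta>_def sin_zero_iff_int2)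
    show "\<forall>k\<in>{1..n}. \<forall>x\<in>{grid n (k - 1)<..<grid n k}.
         v differentiable at x \<and> (deriv v has_real_derivative - \<mu> * v x) (at x)"
    proof (intro ballI)
      fix k x assume k: "k \<in> {1..n}" and x: "x \<in> {grid n (k - 1)<..<grid n k}"
      define r where "r = real k - 1"
      have eq: "\<And>y. y \<in> {grid n (k - 1)<..<grid n k} \<Longrightarrow> \<Psi> r y = v y"
        using vcell[of k] k by (simp add: r_def)
      have dv: "(v has_real_derivative \<Psi>' r y) (at y)" if "y \<in> {grid n (k - 1)<..<grid n k}" for y
        by (rule has_field_derivative_transform_within_open[OF d\<Psi> open_greaterThanLessThan that eq])
      have eqd: "\<And>y. y \<in> {grid n (k - 1)<..<grid n k} \<Longrightarrow> \<Psi>' r y = deriv v y"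
        using dv DERIV_imp_deriv by metis
      have "(deriv v has_real_derivative - \<mu> * \<Psi> r x) (at x)"
        by (rule has_field_derivative_transform_within_open[OF d\<Psi>' open_greaterThanLessThan x eqd])
      then show "v differentiable at x \<and> (deriv v has_real_derivative - \<mu> * v x) (at x)"
        using dv[OF x] eq[OF x] real_differentiable_def by auto
    qed
    show "\<forall>k\<in>{1..n - 1}. \<exists>dL dR. (deriv v \<longlongrightarrow> dL) (at_left (grid n k)) \<and>
         (deriv v \<longlongrightarrow> dR) (at_right (grid n k)) \<and> dR - dL = \<sigma> * v (grid n k)"
    proof
      fix k assume k: "k \<in> {1..n - 1}"
      have dcell: "deriv v y = \<Psi>' (real k' - 1) y" if "k' \<ge> 1" "y \<in> {grid n (k' - 1)<..<grid n k'}" for k' y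
      proof -
        have eq: "\<And>y. y \<in> {grid n (k' - 1)<..<grid n k'} \<Longrightarrow> \<Psi> (real k' - 1) y = v y"
          using vcell[of k'] that(1) by simp
        have "(v has_real_derivative \<Psi>' (real k' - 1) y) (at y)"
          by (rule has_field_derivative_transform_within_open[OF d\<Psi> open_greaterThanLessThan that(2) eq])
        then show ?thesis by (rule DERIV_imp_deriv)
      qed
      have lt1: "grid n (k - 1) < grid n k" using n k by (intro grid_mono) auto
      have lt2: "grid n k < grid n (k + 1)" using n k by (intro grid_mono) auto
      have L: "(deriv v \<longlongrightarrow> \<Psi>' (real k - 1) (grid n k)) (at_left (grid n k))"
      proof -
        have "(\<Psi>' (real k - 1) \<longlongrightarrow> \<Psi>' (real k - 1) (grid n k)) (at_left (grid n k))"
          using c\<Psi>'[where r="real k - 1" and x="grid n k"] unfolding isCont_def filterlim_at_split by blast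
        moreover have "eventually (\<lambda>y. \<Psi>' (real k - 1) y = deriv v y) (at_left (grid n k))"
          by (rule eventually_mono[OF eventually_at_left_real[OF lt1]]) (use dcell k in auto)
        ultimately show ?thesis by (rule Lim_transform_eventually)
      qed
      have R: "(deriv v \<longlongrightarrow> \<Psi>' (real k) (grid n k)) (at_right (grid n k))"
      proof -
        have "(\<Psi>' (real k) \<longlongrightarrow> \<Psi>' (real k) (grid n k)) (at_right (grid n k))"
          using c\<Psi>'[where r="real k" and x="grid n k"] unfolding isCont_def filterlim_at_split by blast
        moreover have "eventually (\<lambda>y. \<Psi>' (real k) y = deriv v y) (at_right (grid n k))"
          by (rule eventually_mono[OF eventually_at_right_real[OF lt2]]) (use dcell[of "k + 1"] in auto)
        ultimately show ?thesis by (rule Lim_transform_eventually)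
      qed
      have e1: "\<Psi>' (real k - 1) (grid n k) = (- sin ((real k - 1) * \<theta>) + sin (real k * \<theta>) * Cf \<mu> h) / s"
        using hh[of "real k - 1"] by (simp add: \<Psi>'_def gr)
      have e2: "\<Psi>' (real k) (grid n k) = (- sin (real k * \<theta>) * Cf \<mu> h + sin ((real k + 1) * \<theta>)) / s"
        using hh[of "real k"] by (simp add: \<Psi>'_def gr)
      have sumsin: "sin ((real k + 1) * \<theta>) + sin ((real k - 1) * \<theta>) = 2 * cos \<theta> * sin (real k * \<theta>)"
      proof -
        have "sin ((real k + 1) * \<theta>) = sin (real k * \<theta> + \<theta>)" by (simp add: algebra_simps)
        moreover have "sin ((real k - 1) * \<theta>) = sin (real k * \<theta> - \<theta>)" by (simp add: algebra_simps)
        ultimately show ?thesis by (simp add: sin_add sin_diff)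
      qed
      have Th: "2 * cos \<theta> = 2 * Cf \<mu> h + \<sigma> * s" using T by (simp add: \<theta>_def h_def s_def)
      have "\<Psi>' (real k) (grid n k) - \<Psi>' (real k - 1) (grid n k)
          = (sin ((real k + 1) * \<theta>) + sin ((real k - 1) * \<theta>) - 2 * Cf \<mu> h * sin (real k * \<theta>)) / s"
        unfolding e1 e2 by (simp add: diff_divide_distrib add_divide_distrib algebra_simps)
      also have "\<dots> = \<sigma> * s * sin (real k * \<theta>) / s" unfolding sumsin Th by (simp add: algebra_simps)
      also have "\<dots> = \<sigma> * v (grid n k)" using s0 vnode[of k] by simp
      finally show "\<exists>dL dR. (deriv v \<longlongrightarrow> dL) (at_left (grid n k)) \<and>
         (deriv v \<longlongrightarrow> dR) (at_right (grid n k)) \<and> dR - dL = \<sigma> * v (grid n k)"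
        using L R by blast
    qed
  qed
  then show ?thesis unfolding sf_eigenvalue_def by blast
qed

lemma phi_nonpos:
  fixes t :: real assumes "0 \<le> t" "t \<le> pi" shows "t * cos t - sin t \<le> 0"
proof -
  have "(\<lambda>t. t * cos t - sin t) 0 \<ge> (\<lambda>t. t * cos t - sin t) t"
  proof (rule DERIV_nonpos_imp_nonincreasing[OF assms(1)])
    fix x :: real assume x: "0 \<le> x" "x \<le> t"
    have "((\<lambda>t. t * cos t - sin t) has_real_derivative (- (x * sin x))) (at x)"
      by (auto intro!: derivative_eq_intros)
    moreover have "x * sin x \<ge> 0" using x assms by (simp add: sin_ge_zero)
    ultimately show "\<exists>y. ((\<lambda>t. t * cos t - sin t) has_real_derivative y) (at x) \<and> y \<le> 0" by force
  qed
  then show ?thesis by simp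
qed

lemma sinc_antimono:
  fixes t1 t2 :: real assumes "0 < t1" "t1 \<le> t2" "t2 \<le> pi"
  shows "sin t2 / t2 \<le> sin t1 / t1"
proof (rule DERIV_nonpos_imp_nonincreasing[OF assms(2)])
  fix x :: real assume x: "t1 \<le> x" "x \<le> t2"
  then have x0: "x > 0" using assms by simp
  have "((\<lambda>t. sin t / t) has_real_derivative ((x * cos x - sin x) / x^2)) (at x)"
    using x0 by (auto intro!: derivative_eq_intros simp: field_simps power2_eq_square)
  moreover have "(x * cos x - sin x) / x^2 \<le> 0"
    using phi_nonpos[of x] x assms by (simp add: divide_nonpos_pos)
  ultimately show "\<exists>y. ((\<lambda>t. sin t / t) has_real_derivative y) (at x) \<and> y \<le> 0" by blast
qed

definition Fn :: "nat \<Rightarrow> real \<Rightarrow> real \<Rightarrow> real" where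
  "Fn n \<sigma> g = 2 * cos (g / real n) + \<sigma> * (sin (g / real n) / g)"

lemma CfSf_sq: "g > 0 \<Longrightarrow> Cf (g^2) x = cos (g * x) \<and> Sf (g^2) x = sin (g * x) / g"
  by (simp add: Cf_def Sf_def)

lemma T_Fn: "g > 0 \<Longrightarrow> 2 * Cf (g^2) (1 / real n) + \<sigma> * Sf (g^2) (1 / real n) = Fn n \<sigma> g"
  by (simp add: CfSf_sq Fn_def)

lemma Fn_strict:
  assumes \<sigma>: "\<sigma> \<ge> 0" and n: "n \<ge> 1" and g: "0 < g1" "g1 < g2" "g2 \<le> real n * pi"
  shows "Fn n \<sigma> g2 < Fn n \<sigma> g1"
proof -
  have npos: "real n > 0" using n by simp
  have t: "0 < g1 / real n" "g1 / real n < g2 / real n" "g2 / real n \<le> pi"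
    using g npos by (auto simp: field_simps divide_strict_right_mono)
  have c: "cos (g2 / real n) < cos (g1 / real n)" using cos_monotone_0_pi[of "g1 / real n" "g2 / real n"] t by simp
  have s: "sin (g2 / real n) / (g2 / real n) \<le> sin (g1 / real n) / (g1 / real n)"
    using sinc_antimono[of "g1 / real n" "g2 / real n"] t by simp
  have e2: "sin (g2 / real n) / g2 = (sin (g2 / real n) / (g2 / real n)) / real n" using npos g by (simp add: field_simps)
  have e1: "sin (g1 / real n) / g1 = (sin (g1 / real n) / (g1 / real n)) / real n" using npos g by (simp add: field_simps)
  have "(sin (g2 / real n) / (g2 / real n)) / real n \<le> (sin (g1 / real n) / (g1 / real n)) / real n"
    by (rule divide_right_mono[OF s]) (use npos in simp)
  then have "sin (g2 / real n) / g2 \<le> sin (g1 / real n) / g1" unfolding e1[symmetric] e2[symmetric] .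
  then have "\<sigma> * (sin (g2 / real n) / g2) \<le> \<sigma> * (sin (g1 / real n) / g1)" using \<sigma> by (rule mult_left_mono)
  then show ?thesis using c unfolding Fn_def by linarith
qed

lemma exist_ev:
  assumes n: "n \<ge> 2" and \<sigma>: "\<sigma> \<ge> 0" and j: "1 \<le> j" "j \<le> n - 1"
    and G: "0 < G" "G \<le> real n * pi" and FG: "Fn n \<sigma> G < 2 * cos (real j * pi / real n)"
  shows "\<exists>g. 0 < g \<and> g < G \<and> Fn n \<sigma> g = 2 * cos (real j * pi / real n) \<and> sf_eigenvalue n \<sigma> (g^2)"
proof -
  have npos: "real n > 0" using n by simp
  define y where "y = 2 * cos (real j * pi / real n)"
  define \<epsilon> where "\<epsilon> = min G (real j * pi / 2)"
  have e0: "0 < \<epsilon>" using G j by (simp add: \<epsilon>_def)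
  have jn: "real j * pi / real n \<le> pi" using j npos by (simp add: field_simps)
  have "\<epsilon> \<le> real j * pi / 2" by (simp add: \<epsilon>_def)
  moreover have "real j * pi / 2 < real j * pi" using j by simp
  ultimately have "\<epsilon> < real j * pi" by linarith
  then have en: "\<epsilon> / real n < real j * pi / real n"
    using npos by (intro divide_strict_right_mono) auto
  have e_pi: "\<epsilon> / real n \<le> pi" using en jn by linarith
  have "cos (\<epsilon> / real n) > cos (real j * pi / real n)"
    using cos_monotone_0_pi[OF _ en jn] e0 npos by simp
  moreover have "\<sigma> * (sin (\<epsilon> / real n) / \<epsilon>) \<ge> 0"
    using \<sigma> e0 npos e_pi by (simp add: sin_ge_zero)
  ultimately have Fe: "Fn n \<sigma> \<epsilon> > y" unfolding Fn_def y_def by linarith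
  then have eG: "\<epsilon> < G" using FG \<epsilon>_def y_def by (metis min.absorb_iff1 min_def not_less_iff_gr_or_eq less_asym' order_le_less)
  have cont: "\<forall>x. \<epsilon> \<le> x \<and> x \<le> G \<longrightarrow> isCont (Fn n \<sigma>) x"
  proof (intro allI impI)
    fix x assume "\<epsilon> \<le> x \<and> x \<le> G"
    then have "x \<noteq> 0" using e0 by auto
    then show "isCont (Fn n \<sigma>) x" unfolding Fn_def[abs_def] using npos by (intro continuous_intros) auto
  qed
  obtain g where g: "\<epsilon> \<le> g" "g \<le> G" "Fn n \<sigma> g = y"
    using IVT2[of "Fn n \<sigma>" G y \<epsilon>] FG Fe eG cont by (auto simp: y_def)
  have gG: "g < G"
  proof (rule ccontr)
    assume "\<not> g < G" then have "g = G" using g by simp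
    then show False using g FG y_def by simp
  qed
  have g0: "0 < g" using g e0 by simp
  have gn: "g / real n < pi" using gG G npos by (simp add: field_simps)
  have "Sf (g^2) (1 / real n) \<noteq> 0"
  proof -
    have "sin (g / real n) > 0" using g0 npos gn by (intro sin_gt_zero) auto
    then show ?thesis using CfSf_sq[OF g0] g0 by simp
  qed
  moreover have "2 * Cf (g^2) (1 / real n) + \<sigma> * Sf (g^2) (1 / real n) = 2 * cos (real j * pi / real n)"
    using T_Fn[OF g0] g y_def by simp
  ultimately have "sf_eigenvalue n \<sigma> (g^2)" using cons[of n "g^2" j \<sigma>] n j by simp
  then show ?thesis using g0 gG g y_def by blast
qed

lemma ev_char:
  assumes ev: "sf_eigenvalue n \<sigma> \<mu>" and n: "n \<ge> 2" and \<sigma>: "\<sigma> \<ge> 0"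
    and lt: "\<mu> < (real n * pi)^2"
  shows "\<mu> > 0 \<and> (\<exists>j\<in>{1..n-1}. Fn n \<sigma> (sqrt \<mu>) = 2 * cos (real j * pi / real n))"
proof -
  obtain v where ep: "sf_eigenpair n \<sigma> \<mu> v" using ev unfolding sf_eigenvalue_def by blast
  have npos: "real n > 0" using n by simp
  have S: "Sf \<mu> (1 / real n) \<noteq> 0"
  proof (cases "\<mu> > 0")
    case True
    have "sqrt \<mu> < sqrt ((real n * pi)^2)" using lt by (simp only: real_sqrt_less_iff)
    then have "sqrt \<mu> < real n * pi" using npos by simp
    then have "sqrt \<mu> / real n < pi" using npos by (simp add: field_simps)
    then have "sin (sqrt \<mu> * (1 / real n)) > 0" using True npos by (intro sin_gt_zero) auto
    then show ?thesis using True by (simp add: Sf_def)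
  next
    case False
    then show ?thesis using npos by (auto simp: Sf_def)
  qed
  from char[OF ep n \<sigma> S] obtain j where pos: "\<mu> > 0" and j: "j \<in> {1..n-1}"
    and T: "2 * Cf \<mu> (1 / real n) + \<sigma> * Sf \<mu> (1 / real n) = 2 * cos (real j * pi / real n)" by blast
  have "Fn n \<sigma> (sqrt \<mu>) = 2 * cos (real j * pi / real n)"
    using T_Fn[of "sqrt \<mu>" n \<sigma>] T pos by simp
  then show ?thesis using pos j by blast
qed

lemma frac_le_pi: "real n > 0 \<Longrightarrow> a \<le> n \<Longrightarrow> real a * pi / real n \<le> pi"
  by (simp add: pos_divide_le_eq)

lemma cos_j_inj:
  assumes n: "n \<ge> 1" and ab: "a \<le> n" "b \<le> n"
    and c: "cos (real a * pi / real n) = cos (real b * pi / real n)"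
  shows "a = b"
proof -
  have npos: "real n > 0" using n by simp
  have "real a * pi / real n = real b * pi / real n"
    by (rule cos_inj_pi[OF _ frac_le_pi[OF npos ab(1)] _ frac_le_pi[OF npos ab(2)] c]) simp_all
  then have "real a * pi = real b * pi" using npos by simp
  then show ?thesis by simp
qed

lemma cos_j_less:
  assumes n: "n \<ge> 1" and ab: "a < b" "b \<le> n"
  shows "cos (real b * pi / real n) < cos (real a * pi / real n)"
proof -
  have npos: "real n > 0" using n by simp
  have "real a * pi / real n < real b * pi / real n" using ab npos by (simp add: divide_strict_right_mono)
  from cos_monotone_0_pi[OF _ this frac_le_pi[OF npos ab(2)]] show ?thesis by simp
qed

theorem corollary1p2:
  fixes n m :: nat and \<sigma> lam :: real and u :: "real \<Rightarrow> real"
  assumes "n \<ge> 2" and "1 \<le> m" and "m \<le> n - 1" and "\<sigma> \<ge> 0"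
    and "sf_mth_eigenvalue n \<sigma> m lam"
    and "sf_eigenpair n \<sigma> lam u"
    and "\<forall>x\<in>{grid n 0..grid n 1}. u x = sin (sqrt lam * x)"
  shows "\<forall>k\<in>{1..n - 1}.
     u (grid n k) = sin (sqrt lam / real n) / sin (real m * pi / real n) * sin (real k * real m * pi / real n)
   \<and> sin (sqrt lam / real n) / sin (real m * pi / real n) * sin (real k * real m * pi / real n)
     = sin (sqrt lam / real n) / sin (real m * pi / real n) * sin (real m * pi * grid n k)"
proof -
  note n = assms(1) and m1 = assms(2) and mn = assms(3) and \<sigma> = assms(4)
  note ep = assms(6) and norm = assms(7)
  define B where "B = {\<mu>. sf_eigenvalue n \<sigma> \<mu> \<and> \<mu> < lam}"
  have finB: "finite B" and cardB: "card B = m - 1"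
    using assms(5) unfolding sf_mth_eigenvalue_def B_def by auto
  have n1: "n \<ge> 1" using n by simp
  have npos: "real n > 0" using n by simp
  define \<gamma> where "\<gamma> = sqrt lam"
  have inj_lemma: "inj_on (\<lambda>j. f j ^ 2) A"
    if A: "A \<subseteq> {1..n-1}" and f: "\<forall>j\<in>A. 0 < f j \<and> Fn n \<sigma> (f j) = 2 * cos (real j * pi / real n)"
    for A :: "nat set" and f
  proof
    fix a b assume ab: "a \<in> A" "b \<in> A" and eq: "f a ^ 2 = f b ^ 2"
    have "f a = f b" using eq f ab by (metis power2_eq_iff_nonneg less_eq_real_def)
    moreover have "Fn n \<sigma> (f a) = 2 * cos (real a * pi / real n)" "Fn n \<sigma> (f b) = 2 * cos (real b * pi / real n)"
      using f ab by auto
    ultimately have "cos (real a * pi / real n) = cos (real b * pi / real n)" by simp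
    moreover have "a \<in> {1..n-1}" "b \<in> {1..n-1}" using ab A by auto
    then have "a \<le> n" "b \<le> n" by auto
    ultimately show "a = b" using cos_j_inj[OF n1] by blast
  qed
  have lt: "lam < (real n * pi)^2"
  proof (rule ccontr)
    assume "\<not> lam < (real n * pi)^2"
    then have big: "lam \<ge> (real n * pi)^2" by simp
    have "\<forall>j\<in>{1..n-1}. \<exists>g. 0 < g \<and> g < real n * pi \<and> Fn n \<sigma> g = 2 * cos (real j * pi / real n) \<and> sf_eigenvalue n \<sigma> (g^2)"
    proof
      fix j assume j: "j \<in> {1..n-1}"
      have "Fn n \<sigma> (real n * pi) = -2" using npos by (simp add: Fn_def)
      moreover have "cos pi < cos (real j * pi / real n)"
      proof -
        have "j < n" using j n by auto
        then show ?thesis using cos_j_less[OF n1, of j n] by simp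
      qed
      ultimately have "Fn n \<sigma> (real n * pi) < 2 * cos (real j * pi / real n)" by simp
      then show "\<exists>g. 0 < g \<and> g < real n * pi \<and> Fn n \<sigma> g = 2 * cos (real j * pi / real n) \<and> sf_eigenvalue n \<sigma> (g^2)"
        using exist_ev[OF n \<sigma>, of j "real n * pi"] j npos by auto
    qed
    then obtain f where f: "\<forall>j\<in>{1..n-1}. 0 < f j \<and> f j < real n * pi \<and> Fn n \<sigma> (f j) = 2 * cos (real j * pi / real n) \<and> sf_eigenvalue n \<sigma> (f j ^ 2)"
      by (metis (no_types, lifting) bchoice)
    have inj: "inj_on (\<lambda>j. f j ^ 2) {1..n-1}" using inj_lemma[of "{1..n-1}" f] f by auto
    have "(\<lambda>j. f j ^ 2) ` {1..n-1} \<subseteq> B"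
    proof
      fix x assume "x \<in> (\<lambda>j. f j ^ 2) ` {1..n-1}"
      then obtain j where j: "j \<in> {1..n-1}" "x = f j ^ 2" by auto
      have fj: "0 < f j" "f j < real n * pi" "sf_eigenvalue n \<sigma> (f j ^ 2)" using f j(1) by auto
      have "f j ^ 2 < (real n * pi)^2" using fj by (intro power_strict_mono) auto
      then show "x \<in> B" using fj j big unfolding B_def by auto
    qed
    from card_inj_on_le[OF inj this finB] have "n - 1 \<le> m - 1" using cardB by simp
    then show False using mn m1 n by linarith
  qed
  have g_lt: "\<gamma> < real n * pi"
  proof -
    have "sqrt lam < sqrt ((real n * pi)^2)" using lt by (simp only: real_sqrt_less_iff)
    then show ?thesis using npos by (simp add: \<gamma>_def)
  qed
  have S: "Sf lam (1 / real n) \<noteq> 0"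
  proof (cases "lam > 0")
    case True
    have "\<gamma> / real n < pi" using g_lt npos by (simp add: field_simps)
    then have "sin (\<gamma> * (1 / real n)) > 0" using True npos by (intro sin_gt_zero) (auto simp: \<gamma>_def)
    then show ?thesis using True by (simp add: Sf_def \<gamma>_def)
  next
    case False
    then show ?thesis using npos by (auto simp: Sf_def)
  qed
  from char[OF ep n \<sigma> S] obtain j where lpos: "lam > 0" and j: "j \<in> {1..n-1}"
    and T: "2 * Cf lam (1 / real n) + \<sigma> * Sf lam (1 / real n) = 2 * cos (real j * pi / real n)"
    and nodes: "\<forall>k\<le>n. u (grid n k) = u (grid n 1) * sin (real k * real j * pi / real n) / sin (real j * pi / real n)"
    by blast
  have gpos: "\<gamma> > 0" using lpos by (simp add: \<gamma>_def)
  have Fg: "Fn n \<sigma> \<gamma> = 2 * cos (real j * pi / real n)"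
    using T_Fn[OF gpos, of n \<sigma>] T lpos by (simp add: \<gamma>_def)
  have jm: "j - 1 \<le> m - 1"
  proof -
    have "\<forall>j'\<in>{1..<j}. \<exists>g. 0 < g \<and> g < \<gamma> \<and> Fn n \<sigma> g = 2 * cos (real j' * pi / real n) \<and> sf_eigenvalue n \<sigma> (g^2)"
    proof
      fix j' assume j': "j' \<in> {1..<j}"
      have "cos (real j * pi / real n) < cos (real j' * pi / real n)"
        using cos_j_less[OF n1, of j' j] j' j by auto
      then have "Fn n \<sigma> \<gamma> < 2 * cos (real j' * pi / real n)" using Fg by simp
      then show "\<exists>g. 0 < g \<and> g < \<gamma> \<and> Fn n \<sigma> g = 2 * cos (real j' * pi / real n) \<and> sf_eigenvalue n \<sigma> (g^2)"
        using exist_ev[OF n \<sigma>, of j' \<gamma>] j' j gpos g_lt by auto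
    qed
    then obtain f where f: "\<forall>j'\<in>{1..<j}. 0 < f j' \<and> f j' < \<gamma> \<and> Fn n \<sigma> (f j') = 2 * cos (real j' * pi / real n) \<and> sf_eigenvalue n \<sigma> (f j' ^ 2)"
      by (metis (no_types, lifting) bchoice)
    have sub: "{1..<j} \<subseteq> {1..n-1}" using j by auto
    have inj: "inj_on (\<lambda>j. f j ^ 2) {1..<j}" using inj_lemma[OF sub, of f] f by auto
    have "(\<lambda>j. f j ^ 2) ` {1..<j} \<subseteq> B"
    proof
      fix x assume "x \<in> (\<lambda>j. f j ^ 2) ` {1..<j}"
      then obtain j' where j': "j' \<in> {1..<j}" "x = f j' ^ 2" by auto
      have fj: "0 < f j'" "f j' < \<gamma>" "sf_eigenvalue n \<sigma> (f j' ^ 2)" using f j'(1) by auto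
      have "f j' ^ 2 < \<gamma> ^ 2" using fj by (intro power_strict_mono) auto
      then show "x \<in> B" using fj j' lpos unfolding B_def \<gamma>_def by auto
    qed
    from card_inj_on_le[OF inj this finB] show ?thesis using cardB by simp
  qed
  have mj: "m - 1 \<le> j - 1"
  proof -
    have "\<forall>\<mu>\<in>B. \<exists>i. i \<in> {1..n-1} \<and> \<mu> > 0 \<and> Fn n \<sigma> (sqrt \<mu>) = 2 * cos (real i * pi / real n)"
    proof
      fix \<mu> assume "\<mu> \<in> B"
      then have "sf_eigenvalue n \<sigma> \<mu>" "\<mu> < (real n * pi)^2" using lt unfolding B_def by auto
      from ev_char[OF this(1) n \<sigma> this(2)]
      show "\<exists>i. i \<in> {1..n-1} \<and> \<mu> > 0 \<and> Fn n \<sigma> (sqrt \<mu>) = 2 * cos (real i * pi / real n)" by blast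
    qed
    then obtain J where J: "\<forall>\<mu>\<in>B. J \<mu> \<in> {1..n-1} \<and> \<mu> > 0 \<and> Fn n \<sigma> (sqrt \<mu>) = 2 * cos (real (J \<mu>) * pi / real n)"
      by (metis (no_types, lifting) bchoice)
    have img: "J ` B \<subseteq> {1..<j}"
    proof
      fix x assume "x \<in> J ` B"
      then obtain \<mu> where mu: "\<mu> \<in> B" "x = J \<mu>" by auto
      have mpos: "\<mu> > 0" and Jm: "J \<mu> \<in> {1..n-1}" using J mu by auto
      have "sqrt \<mu> < \<gamma>" using mu unfolding B_def \<gamma>_def by auto
      then have "Fn n \<sigma> \<gamma> < Fn n \<sigma> (sqrt \<mu>)"
        using Fn_strict[OF \<sigma> n1, of "sqrt \<mu>" \<gamma>] mpos g_lt by simp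
      then have "cos (real j * pi / real n) < cos (real (J \<mu>) * pi / real n)" using J mu Fg by simp
      then have cc: "cos (real j * pi / real n) < cos (real (J \<mu>) * pi / real n)" .
      have Jn: "J \<mu> \<le> n" using Jm by auto
      have "J \<mu> < j"
      proof (rule ccontr)
        assume "\<not> J \<mu> < j"
        then consider "J \<mu> = j" | "j < J \<mu>" by linarith
        then show False
        proof cases
          case 1 then show False using cc by simp
        next
          case 2 then show False using cos_j_less[OF n1 2 Jn] cc by simp
        qed
      qed
      then show "x \<in> {1..<j}" using Jm mu by auto
    qed
    have inj: "inj_on J B"
    proof
      fix x y assume xy: "x \<in> B" "y \<in> B" "J x = J y"
      then have eqF: "Fn n \<sigma> (sqrt x) = Fn n \<sigma> (sqrt y)" and pos: "x > 0" "y > 0" using J by auto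
      have "x < lam" "y < lam" using xy unfolding B_def by auto
      then have "sqrt x < sqrt lam" "sqrt y < sqrt lam" by auto
      then have lts: "sqrt x < real n * pi" "sqrt y < real n * pi"
        using g_lt unfolding \<gamma>_def by linarith+
      have "sqrt x = sqrt y"
      proof (rule ccontr)
        assume "sqrt x \<noteq> sqrt y"
        then consider "sqrt x < sqrt y" | "sqrt y < sqrt x" by linarith
        then show False
        proof cases
          case 1 then show False using Fn_strict[OF \<sigma> n1, of "sqrt x" "sqrt y"] pos lts eqF by simp
        next
          case 2 then show False using Fn_strict[OF \<sigma> n1, of "sqrt y" "sqrt x"] pos lts eqF by simp
        qed
      qed
      then show "x = y" by simp
    qed
    from card_inj_on_le[OF inj img] show ?thesis using cardB by simp
  qed
  have jm_eq: "j = m" using jm mj j m1 by auto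
  have u1: "u (grid n 1) = sin (\<gamma> / real n)"
  proof -
    have "grid n 1 \<in> {grid n 0..grid n 1}" using grid_ge0[of n 1] by simp
    then show ?thesis using norm by (simp add: \<gamma>_def grid_def)
  qed
  show ?thesis
  proof
    fix k assume k: "k \<in> {1..n - 1}"
    have "u (grid n k) = sin (\<gamma> / real n) * sin (real k * real m * pi / real n) / sin (real m * pi / real n)"
      using nodes k u1 jm_eq by auto
    then show "u (grid n k) = sin (sqrt lam / real n) / sin (real m * pi / real n) * sin (real k * real m * pi / real n)
   \<and> sin (sqrt lam / real n) / sin (real m * pi / real n) * sin (real k * real m * pi / real n)
     = sin (sqrt lam / real n) / sin (real m * pi / real n) * sin (real m * pi * grid n k)"
      by (simp add: \<gamma>_def grid_def mult.commute mult.left_commute)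
  qed
qed

end
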